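(* Let $d\ge 2$ and let $\varphi:[0,\infty)\to[0,1]$ be the Laplace transform of a strictly positive random variable, continuous and strictly decreasing with $\varphi(0)=1$ and $\lim_{t\to\infty}\varphi(t)=0$, and let $C(u_1,\dots,u_d)=\varphi\big(\sum_{i=1}^d\varphi^{-1}(u_i)\big)$ be the associated Archimedean copula. If $\varphi$ is slowly varying at $\infty$, then for every $w=(w_1,\dots,w_d)\in\mathbb{R}_+^d$, $$\lim_{u\downarrow 0}\frac{C(uw_1,\dots,uw_d)}{u}=\min\{w_1,\dots,w_d\}.$$
   Context: A measurable function $f>0$ is slowly varying at $\infty$ if $f(tx)/f(t)\to 1$ as $t\to\infty$ for every $x>0$. *)

theory Defs
  imports "HOL-Probability.Probability"
begin

text \<open>Every real random
  variable can be realised on a probability space over the reals, so the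
  probability space is taken of type real measure.\<close>
definition laplace_transform_pos_rv :: "(real \<Rightarrow> real) \<Rightarrow> bool" where
  "laplace_transform_pos_rv phi \<longleftrightarrow>
     (\<exists>(M::real measure) X. prob_space M \<and> X \<in> borel_measurable M \<and>
        (AE \<omega> in M. X \<omega> > 0) \<and>
        (\<forall>t\<ge>0. phi t = prob_space.expectation M (\<lambda>\<omega>. exp (- t * X \<omega>))))"

definition slowly_varying_at_top :: "(real \<Rightarrow> real) \<Rightarrow> bool" where
  "slowly_varying_at_top f \<longleftrightarrow>
     (\<forall>t\<ge>0. f t > 0) \<and> set_borel_measurable borel {0..} f \<and>
     (\<forall>x>0. ((\<lambda>t. f (t * x) / f t) \<longlongrightarrow> 1) at_top)"

text \<open>Archimedean copula in dimension d with generator phi,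
  C(u_0,...,u_{d-1}) = phi (sum_i phi^{-1}(u_i)), with the standard convention
  phi^{-1}(0) = infinity, phi(infinity) = 0, i.e. C(u) = 0 if some u_i = 0.\<close>
definition archimedean_copula :: "nat \<Rightarrow> (real \<Rightarrow> real) \<Rightarrow> (nat \<Rightarrow> real) \<Rightarrow> real" where
  "archimedean_copula d phi u =
     (if \<exists>i<d. u i = 0 then 0
      else phi (\<Sum>i<d. inv_into {0..} phi (u i)))"

end

theory Submission
  imports Defs
begin

theorem theorem2p3:
  fixes d :: nat and phi :: "real \<Rightarrow> real" and w :: "nat \<Rightarrow> real"
  assumes "d \<ge> 2"
    and "laplace_transform_pos_rv phi"
    and "continuous_on {0..} phi"
    and "strict_antimono_on {0..} phi"
    and "phi 0 = 1"
    and "(phi \<longlongrightarrow> 0) at_top"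
    and "\<forall>t\<ge>0. phi t \<in> {0..1}"
    and "slowly_varying_at_top phi"
    and "\<forall>i<d. w i \<ge> 0"
  shows "((\<lambda>u. archimedean_copula d phi (\<lambda>i. u * w i) / u)
           \<longlongrightarrow> Min (w ` {..<d})) (at_right 0)"
proof -
  note cont = assms(3) and sam = assms(4) and lim0 = assms(6) and sv = assms(8)
  define \<psi> where "\<psi> = inv_into {0..} phi"
  have pos: "\<And>t. t \<ge> 0 \<Longrightarrow> phi t > 0" using sv unfolding slowly_varying_at_top_def by auto
  have strict: "\<And>x y. 0 \<le> x \<Longrightarrow> x < y \<Longrightarrow> phi y < phi x"
    using sam by (auto simp: monotone_on_def)
  have anti: "\<And>x y. 0 \<le> x \<Longrightarrow> x \<le> y \<Longrightarrow> phi y \<le> phi x"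
    using strict by (metis order_le_less)
  have inv: "\<psi> v \<ge> 0 \<and> phi (\<psi> v) = v" if v: "0 < v" "v \<le> 1" for v
  proof -
    have "eventually (\<lambda>t. phi t < v) at_top" using order_tendstoD(2)[OF lim0 v(1)] .
    then obtain N where N: "\<And>t. t \<ge> N \<Longrightarrow> phi t < v" by (auto simp: eventually_at_top_linorder)
    define T where "T = max N 0"
    have "phi T \<le> v" using N[of T] by (simp add: T_def)
    moreover have "v \<le> phi 0" using v assms(5) by simp
    moreover have "continuous_on {0..T} phi" using cont by (rule continuous_on_subset) auto
    ultimately obtain x where x: "x \<in> {0..T}" "phi x = v"
      using IVT2'[of phi T v 0] by (auto simp: T_def)
    hence "v \<in> phi ` {0..}" by auto
    thus ?thesis unfolding \<psi>_def by (meson f_inv_into_f inv_into_into atLeast_iff)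
  qed
  have dne: "{..<d} \<noteq> {}" using assms(1) by (metis lessThan_empty_iff not_numeral_le_zero le_zero_eq)
  obtain j where j: "j < d" "w j = Min (w ` {..<d})"
  proof -
    have "Min (w ` {..<d}) \<in> w ` {..<d}" using dne by (intro Min_in) auto
    thus ?thesis using that by auto
  qed
  have minle: "\<And>i. i < d \<Longrightarrow> Min (w ` {..<d}) \<le> w i" by simp
  show ?thesis
  proof (cases "\<exists>i<d. w i = 0")
    case True
    then obtain k where k: "k < d" "w k = 0" by auto
    have m0: "Min (w ` {..<d}) = 0" using minle[OF k(1)] k j assms(9)
      by (metis order_antisym)
    have "eventually (\<lambda>u. archimedean_copula d phi (\<lambda>i. u * w i) / u = 0) (at_right 0)"
      using k by (intro always_eventually allI) (auto simp: archimedean_copula_def)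
    thus ?thesis unfolding m0 by (rule tendsto_eventually)
  next
    case False
    with assms(9) have wpos: "\<And>i. i < d \<Longrightarrow> w i > 0" by force
    define m where "m = Min (w ` {..<d})"
    have mpos: "m > 0" using j wpos[OF j(1)] m_def by simp
    define M where "M = Max (w ` {..<d})"
    have Mge: "\<And>i. i < d \<Longrightarrow> w i \<le> M" by (simp add: M_def)
    have Mpos: "M > 0" using Mge[OF j(1)] wpos[OF j(1)] by simp
    have ev: "eventually (\<lambda>u. 0 < u \<and> u < 1 / M) (at_right 0)"
      unfolding eventually_at_right_field using Mpos by (intro exI[of _ "1/M"]) auto
    define L where "L = (\<lambda>u. m * (phi (\<psi> (u * m) * real d) / phi (\<psi> (u * m))))"
    have bounds: "L u \<le> archimedean_copula d phi (\<lambda>i. u * w i) / u \<and>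
                  archimedean_copula d phi (\<lambda>i. u * w i) / u \<le> m"
      if u: "0 < u" "u < 1 / M" for u
    proof -
      have uw: "0 < u * w i \<and> u * w i \<le> 1" if "i < d" for i
      proof -
        have "u * w i \<le> u * M" using Mge[OF that] u by (simp add: mult_left_mono)
        also have "\<dots> < 1" using u Mpos by (simp add: field_simps)
        finally show ?thesis using u wpos[OF that] by simp
      qed
      have um: "0 < u * m" "u * m \<le> 1" using uw[OF j(1)] j m_def by auto
      define S where "S = (\<Sum>i<d. \<psi> (u * w i))"
      have C: "archimedean_copula d phi (\<lambda>i. u * w i) = phi S"
        unfolding archimedean_copula_def S_def \<psi>_def using uw by force
      have nn: "\<psi> (u * w i) \<ge> 0" if "i < d" for i using inv[of "u * w i"] uw[OF that] by simp
      have pm: "\<psi> (u * m) \<ge> 0" "phi (\<psi> (u * m)) = u * m" using inv[OF um] by auto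
      have "\<psi> (u * w j) \<le> S" unfolding S_def
        by (rule member_le_sum) (use nn j in auto)
      hence "phi S \<le> phi (\<psi> (u * w j))" by (rule anti[OF nn[OF j(1)]])
      also have "\<dots> = u * m" using inv[OF um] by (simp add: j(2)[folded m_def])
      finally have up: "phi S / u \<le> m" using u by (simp add: divide_le_eq mult.commute)
      have le: "\<psi> (u * w i) \<le> \<psi> (u * m)" if "i < d" for i
      proof (rule ccontr)
        assume "\<not> ?thesis"
        hence "phi (\<psi> (u * w i)) < phi (\<psi> (u * m))" using strict[OF pm(1)] by simp
        hence "u * w i < u * m" using inv[of "u * w i"] uw[OF that] pm by simp
        thus False using minle[OF that] u m_def by (simp add: mult_le_cancel_left)
      qed
      have Snn: "0 \<le> S" unfolding S_def by (rule sum_nonneg) (use nn in auto)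
      have "S \<le> real (card {..<d}) * \<psi> (u * m)" unfolding S_def
        by (rule sum_bounded_above) (use le in auto)
      hence "S \<le> \<psi> (u * m) * real d" by (simp add: mult.commute)
      hence lo: "phi (\<psi> (u * m) * real d) \<le> phi S"
        by (rule anti[OF Snn])
      have "L u = phi (\<psi> (u * m) * real d) / u"
        unfolding L_def using pm u mpos by simp
      hence "L u \<le> phi S / u" using lo u by (simp add: divide_right_mono)
      thus ?thesis using up C by simp
    qed
    have psilim: "filterlim (\<lambda>u. \<psi> (u * m)) at_top (at_right 0)"
      unfolding filterlim_at_top
    proof
      fix Z :: real
      define K where "K = max Z 0"
      have pK: "0 < phi K" "phi K \<le> 1" using pos assms(7) by (auto simp: K_def)
      show "eventually (\<lambda>u. Z \<le> \<psi> (u * m)) (at_right 0)"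
        unfolding eventually_at_right_field
      proof (intro exI[of _ "phi K / m"] conjI allI impI)
        show "0 < phi K / m" using pK mpos by simp
        fix u :: real assume u: "0 < u" "u < phi K / m"
        have um: "0 < u * m" "u * m < phi K" using u mpos by (auto simp: field_simps)
        have "K < \<psi> (u * m)"
        proof (rule ccontr)
          assume "\<not> ?thesis"
          have um1: "u * m \<le> 1" using um pK by simp
          have pm: "\<psi> (u * m) \<ge> 0" "phi (\<psi> (u * m)) = u * m" using inv[OF um(1) um1] by auto
          from \<open>\<not> K < \<psi> (u * m)\<close> have "phi K \<le> phi (\<psi> (u * m))" using anti[OF pm(1)] by simp
          thus False using pm um by simp
        qed
        thus "Z \<le> \<psi> (u * m)" by (simp add: K_def)
      qed
    qed
    have g: "((\<lambda>t. phi (t * real d) / phi t) \<longlongrightarrow> 1) at_top"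
      using sv assms(1) unfolding slowly_varying_at_top_def by auto
    have Llim: "(L \<longlongrightarrow> m) (at_right 0)"
      unfolding L_def using tendsto_mult[OF tendsto_const[of m] filterlim_compose[OF g psilim]]
      by simp
    show ?thesis unfolding m_def[symmetric]
    proof (rule tendsto_sandwich[OF _ _ Llim tendsto_const])
      show "eventually (\<lambda>u. L u \<le> archimedean_copula d phi (\<lambda>i. u * w i) / u) (at_right 0)"
        using ev by eventually_elim (use bounds in blast)
      show "eventually (\<lambda>u. archimedean_copula d phi (\<lambda>i. u * w i) / u \<le> m) (at_right 0)"
        using ev by eventually_elim (use bounds in blast)
    qed
  qed
qed

end
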